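(* Let $p,q\in\mathbb{G}^n$ with $\|p-q\|\ge2$. Then $\lceil(p+q)/2\rceil\notin\{p,q\}$ and $\lfloor(p+q)/2\rfloor\notin\{p,q\}$. Moreover, $\|p-\lceil(p+q)/2\rceil\|<\|p-q\|$ and $\|p-\lfloor(p+q)/2\rfloor\|<\|p-q\|$.
   Context: Fix an integer $k\ge1$. The infinite $k$-star $\mathbb{T}$ is $\mathbb{R}_+\times\{1,\dots,k\}$ with all points $(0,s)$ identified to a point $0$; $(x,s)$ is also written $x$; $\mathrm{dist}((x,s),(x',s'))=|x-x'|$ if $s=s'$ and $x+x'$ otherwise. The midpoint $(x+x')/2$ is the unique $u\in\mathbb{T}$ with $\mathrm{dist}(x,u)=\mathrm{dist}(u,x')=\mathrm{dist}(x,x')/2$. $x$ is integral if $\mathrm{dist}(x,0)\in\mathbb{Z}$, proper half-integral if $2\mathrm{dist}(x,0)\in\mathbb{Z}$ but $\mathrm{dist}(x,0)\notin\mathbb{Z}$. $\mathbb{G}\subseteq\mathbb{T}\times\mathbb{R}$ is the set of $(x,y)$ with $x,y$ both integral or both proper half-integral; $(x,y)\in\mathbb{G}$ is integral if both are integral, and then even if $\mathrm{dist}(x,0)-y$ is even, odd otherwise. For $p=(x,y),q=(x',y')\in\mathbb{T}\times\mathbb{R}$, $\|p-q\|=\mathrm{dist}(x,x')+|y-y'|$ and $(p+q)/2=((x+x')/2,(y+y')/2)$. $p,q\in\mathbb{G}$ are adjacent if $\|p-q\|=1$ and exactly one is integral; then $p\prec q$ if $p$ is even or $q$ is odd, and $\preceq$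 is the reflexive transitive closure. For $p,q\in\mathbb{G}$ there is a unique pair $u\preceq v$ in $\mathbb{G}$ with $(u+v)/2=(p+q)/2$; set $\lfloor(p+q)/2\rfloor=u$, $\lceil(p+q)/2\rceil=v$. On $\mathbb{G}^n$ these operations are taken componentwise, and $\|p-q\|:=\max_{1\le i\le n}\|p_i-q_i\|$. *)

theory Defs
  imports Complex_Main
begin

text \<open>Points of the infinite k-star: pairs (x, s) with x \<ge> 0, s \<in> {1..k};
  the identification of all (0, s) is realised by the canonical representative (0, 1).\<close>
type_synonym tpt = "real \<times> nat"
type_synonym gpt = "tpt \<times> real"

definition tvalid :: "nat \<Rightarrow> tpt \<Rightarrow> bool" where
  "tvalid k a \<longleftrightarrow> fst a \<ge> 0 \<and> snd a \<in> {1..k} \<and> (fst a = 0 \<longrightarrow> snd a = 1)"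

definition tzero :: tpt where "tzero = (0, 1)"

definition tdist :: "tpt \<Rightarrow> tpt \<Rightarrow> real" where
  "tdist a b = (if snd a = snd b then \<bar>fst a - fst b\<bar> else fst a + fst b)"

definition tmid :: "nat \<Rightarrow> tpt \<Rightarrow> tpt \<Rightarrow> tpt" where
  "tmid k a b = (THE u. tvalid k u \<and> tdist a u = tdist a b / 2 \<and> tdist u b = tdist a b / 2)"

definition t_integral :: "tpt \<Rightarrow> bool" where
  "t_integral a \<longleftrightarrow> tdist a tzero \<in> \<int>"

definition t_phalf :: "tpt \<Rightarrow> bool" where
  "t_phalf a \<longleftrightarrow> 2 * tdist a tzero \<in> \<int> \<and> tdist a tzero \<notin> \<int>"

definition r_phalf :: "real \<Rightarrow> bool" where
  "r_phalf y \<longleftrightarrow> 2 * y \<in> \<int> \<and> y \<notin> \<int>"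

definition Grid :: "nat \<Rightarrow> gpt set" where
  "Grid k = {(x, y). tvalid k x \<and> ((t_integral x \<and> y \<in> \<int>) \<or> (t_phalf x \<and> r_phalf y))}"

definition g_integral :: "gpt \<Rightarrow> bool" where
  "g_integral p \<longleftrightarrow> t_integral (fst p) \<and> snd p \<in> \<int>"

definition g_even :: "gpt \<Rightarrow> bool" where
  "g_even p \<longleftrightarrow> g_integral p \<and> (\<exists>m::int. tdist (fst p) tzero - snd p = 2 * of_int m)"

definition g_odd :: "gpt \<Rightarrow> bool" where
  "g_odd p \<longleftrightarrow> g_integral p \<and> \<not> g_even p"

definition gnorm :: "gpt \<Rightarrow> gpt \<Rightarrow> real" where
  "gnorm p q = tdist (fst p) (fst q) + \<bar>snd p - snd q\<bar>"

definition gmid :: "nat \<Rightarrow> gpt \<Rightarrow> gpt \<Rightarrow> gpt" where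
  "gmid k p q = (tmid k (fst p) (fst q), (snd p + snd q) / 2)"

definition g_adj :: "nat \<Rightarrow> gpt \<Rightarrow> gpt \<Rightarrow> bool" where
  "g_adj k p q \<longleftrightarrow> p \<in> Grid k \<and> q \<in> Grid k \<and> gnorm p q = 1 \<and> (g_integral p \<noteq> g_integral q)"

definition g_prec :: "nat \<Rightarrow> gpt \<Rightarrow> gpt \<Rightarrow> bool" where
  "g_prec k p q \<longleftrightarrow> g_adj k p q \<and> (g_even p \<or> g_odd q)"

definition g_preceq :: "nat \<Rightarrow> gpt \<Rightarrow> gpt \<Rightarrow> bool" where
  "g_preceq k = (g_prec k)\<^sup>*\<^sup>*"

definition g_floorceil :: "nat \<Rightarrow> gpt \<Rightarrow> gpt \<Rightarrow> gpt \<times> gpt" where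
  "g_floorceil k p q = (THE uv. fst uv \<in> Grid k \<and> snd uv \<in> Grid k \<and> g_preceq k (fst uv) (snd uv)
      \<and> gmid k (fst uv) (snd uv) = gmid k p q)"

definition g_floor :: "nat \<Rightarrow> gpt \<Rightarrow> gpt \<Rightarrow> gpt" where
  "g_floor k p q = fst (g_floorceil k p q)"

definition g_ceil :: "nat \<Rightarrow> gpt \<Rightarrow> gpt \<Rightarrow> gpt" where
  "g_ceil k p q = snd (g_floorceil k p q)"

definition v_floor :: "nat \<Rightarrow> ('n \<Rightarrow> gpt) \<Rightarrow> ('n \<Rightarrow> gpt) \<Rightarrow> ('n \<Rightarrow> gpt)" where
  "v_floor k p q = (\<lambda>i. g_floor k (p i) (q i))"

definition v_ceil :: "nat \<Rightarrow> ('n \<Rightarrow> gpt) \<Rightarrow> ('n \<Rightarrow> gpt) \<Rightarrow> ('n \<Rightarrow> gpt)" where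
  "v_ceil k p q = (\<lambda>i. g_ceil k (p i) (q i))"

definition vnorm :: "('n::finite \<Rightarrow> gpt) \<Rightarrow> ('n \<Rightarrow> gpt) \<Rightarrow> real" where
  "vnorm p q = Max (range (\<lambda>i. gnorm (p i) (q i)))"

end

theory Submission
  imports Defs
begin


lemma tdist_sym: "tdist a b = tdist b a"
  by (auto simp: tdist_def)

lemma tdist_self: "tdist a a = 0"
  by (auto simp: tdist_def)

lemma tdist_nonneg: "fst a \<ge> 0 \<Longrightarrow> fst b \<ge> 0 \<Longrightarrow> tdist a b \<ge> 0"
  by (auto simp: tdist_def)

lemma tdist_tri: "fst a \<ge> 0 \<Longrightarrow> fst b \<ge> 0 \<Longrightarrow> fst c \<ge> 0 \<Longrightarrow> tdist a c \<le> tdist a b + tdist b c"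
  by (auto simp: tdist_def)

lemma tdist_ge: "fst a \<ge> 0 \<Longrightarrow> fst b \<ge> 0 \<Longrightarrow> \<bar>fst a - fst b\<bar> \<le> tdist a b"
  by (auto simp: tdist_def)

lemma tdist_eq0: "tvalid k a \<Longrightarrow> tvalid k b \<Longrightarrow> tdist a b = 0 \<Longrightarrow> a = b"
  by (cases a; cases b; auto simp: tdist_def tvalid_def split: if_splits)

lemma tdist_zero: "tvalid k a \<Longrightarrow> tdist a tzero = fst a"
  by (auto simp: tdist_def tvalid_def tzero_def)

definition mk :: "real \<Rightarrow> nat \<Rightarrow> tpt" where "mk r s = (if r = 0 then (0, 1) else (r, s))"

lemma fst_mk[simp]: "fst (mk r s) = r" by (simp add: mk_def)

lemma tmid_ex: assumes "tvalid k a" "tvalid k b"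
  shows "\<exists>u. tvalid k u \<and> tdist a u = tdist a b / 2 \<and> tdist u b = tdist a b / 2"
proof -
  obtain r s r' s' where ab: "a = (r,s)" "b = (r',s')" by fastforce
  show ?thesis
  proof (cases "s = s'")
    case True
    then show ?thesis using assms ab
      by (intro exI[of _ "((r+r')/2, s)"]) (auto simp: tvalid_def tdist_def abs_if field_simps)
  next
    case False
    show ?thesis
    proof (cases "r \<ge> r'")
      case True
      then show ?thesis using assms ab False
        by (intro exI[of _ "mk ((r-r')/2) s"]) (auto simp: tvalid_def tdist_def mk_def field_simps)
    next
      case F2: False
      then show ?thesis using assms ab False
        by (intro exI[of _ "mk ((r'-r)/2) s'"]) (auto simp: tvalid_def tdist_def mk_def field_simps)
    qed
  qed
qed

lemma tmid_uniq: assumes "tvalid k a" "tvalid k b" "tvalid k u" "tvalid k w"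
  "tdist a u = tdist a b / 2" "tdist u b = tdist a b / 2"
  "tdist a w = tdist a b / 2" "tdist w b = tdist a b / 2"
  shows "u = w"
proof -
  obtain r s r' s' t1 s1 t2 s2 where ab: "a = (r,s)" "b = (r',s')" "u = (t1,s1)" "w = (t2,s2)" by fastforce
  show ?thesis using assms unfolding ab tvalid_def tdist_def
    by (auto simp: abs_if split: if_splits)
qed


lemma tmid_char: assumes "tvalid k a" "tvalid k b"
  shows "tvalid k (tmid k a b) \<and> tdist a (tmid k a b) = tdist a b / 2 \<and> tdist (tmid k a b) b = tdist a b / 2"
proof -
  let ?P = "\<lambda>u. tvalid k u \<and> tdist a u = tdist a b / 2 \<and> tdist u b = tdist a b / 2"
  have "\<exists>!u. ?P u" using tmid_ex[OF assms] tmid_uniq[OF assms] by blast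
  from theI'[OF this] show ?thesis unfolding tmid_def .
qed

lemma tmid_eq: assumes "tvalid k a" "tvalid k b" "tvalid k u"
  "tdist a u = tdist a b / 2" "tdist u b = tdist a b / 2"
  shows "tmid k a b = u"
  using tmid_char[OF assms(1,2)] tmid_uniq[OF assms(1,2,3)] assms(4,5) by metis

lemma tmid_self: "tvalid k a \<Longrightarrow> tmid k a a = a"
  by (rule tmid_eq) (auto simp: tdist_self)

lemma gnorm_sym: "gnorm p q = gnorm q p"
  by (simp add: gnorm_def tdist_sym abs_minus_commute)

lemma gnorm_tri: "fst (fst p) \<ge> 0 \<Longrightarrow> fst (fst q) \<ge> 0 \<Longrightarrow> fst (fst r) \<ge> 0 \<Longrightarrow>
  gnorm p r \<le> gnorm p q + gnorm q r"
  unfolding gnorm_def using tdist_tri[of "fst p" "fst q" "fst r"] by linarith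

lemma gmid_char: assumes "tvalid k (fst p)" "tvalid k (fst q)"
  shows "tvalid k (fst (gmid k p q)) \<and> gnorm p (gmid k p q) = gnorm p q / 2 \<and> gnorm (gmid k p q) q = gnorm p q / 2"
  proof -
  have e: "\<bar>snd p - (snd p + snd q) / 2\<bar> = \<bar>snd p - snd q\<bar> / 2" "\<bar>(snd p + snd q) / 2 - snd q\<bar> = \<bar>snd p - snd q\<bar> / 2"
    by (auto simp: abs_if field_simps)
  show ?thesis using tmid_char[OF assms] e by (simp add: gmid_def gnorm_def)
qed

lemma gmid_self: "tvalid k (fst p) \<Longrightarrow> gmid k p p = p"
  by (cases p) (simp add: gmid_def tmid_self)

lemma gnorm_self: "gnorm p p = 0" by (simp add: gnorm_def tdist_self)

lemma Grid_valid: "p \<in> Grid k \<Longrightarrow> tvalid k (fst p)"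
  by (auto simp: Grid_def)

lemma tvalid_nonneg: "tvalid k a \<Longrightarrow> fst a \<ge> 0" by (simp add: tvalid_def)

lemma half_int_iff: "(of_int a / 2 :: real) \<in> \<int> \<longleftrightarrow> even a"
proof
  assume "of_int a / 2 \<in> (\<int> :: real set)"
  then obtain n where "of_int a / 2 = (of_int n :: real)" using Ints_cases by metis
  hence "of_int a = (of_int (2*n) :: real)" by simp
  hence "a = 2*n" by (simp only: of_int_eq_iff)
  thus "even a" by simp
next
  assume "even a" then obtain n where "a = 2*n" by auto
  thus "of_int a / 2 \<in> (\<int> :: real set)" by simp
qed

lemma real_in_Ints_half: assumes "(2 * x :: real) \<in> \<int>" shows "\<exists>a. x = of_int a / 2"
proof -
  obtain a where "2 * x = of_int a" using Ints_cases[OF assms] by metis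
  then have "x = of_int a / 2" by simp
  then show ?thesis by blast
qed

lemma even4_iff: "(\<exists>m::int. (of_int a / 2 - of_int b / 2 :: real) = 2 * of_int m) \<longleftrightarrow> 4 dvd (a - b)"
proof
  assume "\<exists>m::int. (of_int a / 2 - of_int b / 2 :: real) = 2 * of_int m"
  then obtain m::int where "(of_int a / 2 - of_int b / 2 :: real) = 2 * of_int m" by blast
  hence "of_int (a - b) = (of_int (4*m) :: real)" by simp
  hence "a - b = 4*m" by (simp only: of_int_eq_iff)
  thus "4 dvd (a - b)" by simp
next
  assume "4 dvd (a - b)" then obtain m where "a - b = 4*m" by auto
  hence "(of_int a / 2 - of_int b / 2 :: real) = 2 * of_int m"
    by (simp add: field_simps)
  thus "\<exists>m::int. (of_int a / 2 - of_int b / 2 :: real) = 2 * of_int m" by blast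
qed

lemma grid_D: assumes "p \<in> Grid k"
  obtains a b :: int where "fst (fst p) = of_int a / 2" "snd p = of_int b / 2" "even a = even b"
    "g_integral p = even a" "g_even p = (even a \<and> 4 dvd (a - b))" "a \<ge> 0"
proof -
  obtain x y where p: "p = (x, y)" by fastforce
  have v: "tvalid k x" and c: "(t_integral x \<and> y \<in> \<int>) \<or> (t_phalf x \<and> r_phalf y)"
    using assms by (auto simp: Grid_def p)
  have tz: "tdist x tzero = fst x" using tdist_zero[OF v] .
  have "2 * fst x \<in> \<int>" using c unfolding t_integral_def t_phalf_def tz by auto
  then obtain a where a: "fst x = of_int a / 2" using real_in_Ints_half by blast
  have "2 * y \<in> \<int>" using c unfolding r_phalf_def by auto
  then obtain b where b: "y = of_int b / 2" using real_in_Ints_half by blast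
  have ia: "t_integral x = even a" unfolding t_integral_def tz a half_int_iff ..
  have ib: "(y \<in> \<int>) = even b" unfolding b half_int_iff ..
  have par: "even a = even b" using c unfolding t_phalf_def r_phalf_def tz a b
    using ia ib unfolding t_integral_def tz a b by auto
  have gi: "g_integral p = even a" using ia ib par by (simp add: g_integral_def p)
  have ge: "g_even p = (even a \<and> 4 dvd (a - b))"
    using gi unfolding g_even_def p by (simp add: tz a b even4_iff)
  have "a \<ge> 0" using v a by (simp add: tvalid_def)
  show ?thesis by (rule that[of a b]) (use a b par gi ge p \<open>a \<ge> 0\<close> in auto)
qed

lemma grid_I: assumes "tvalid k x" "fst x = of_int a / 2" "y = of_int b / 2" "even a = even b"
  shows "(x, y) \<in> Grid k" "g_integral (x, y) = even a" "g_even (x, y) = (even a \<and> 4 dvd (a - b))"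
proof -
  have tz: "tdist x tzero = fst x" using tdist_zero[OF assms(1)] .
  have ia: "t_integral x = even a" unfolding t_integral_def tz assms(2) half_int_iff ..
  have ib: "(y \<in> \<int>) = even b" unfolding assms(3) half_int_iff ..
  have h: "2 * fst x \<in> \<int>" "2 * y \<in> \<int>" unfolding assms(2,3) by simp_all
  have "(t_integral x \<and> y \<in> \<int>) \<or> (t_phalf x \<and> r_phalf y)"
  proof (cases "even a")
    case True then show ?thesis using ia ib assms(4) by simp
  next
    case False
    then have "\<not> t_integral x" "y \<notin> \<int>" using ia ib assms(4) by auto
    then show ?thesis using h unfolding t_phalf_def r_phalf_def tz t_integral_def by simp
  qed
  then show "(x, y) \<in> Grid k" using assms(1) unfolding Grid_def by simp
  show gi: "g_integral (x, y) = even a" using ia ib assms(4) by (simp add: g_integral_def)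
  show "g_even (x, y) = (even a \<and> 4 dvd (a - b))"
    using gi unfolding g_even_def by (simp add: tz assms(2,3) even4_iff)
qed


lemma two_abs_half: "2 * \<bar>(of_int a / 2 :: real) - of_int b / 2\<bar> = of_int \<bar>a - b\<bar>"
  by (simp add: abs_if field_simps)

lemma adj_half: assumes "g_adj k u v"
  shows "tdist (fst u) (fst v) = 1/2" "\<bar>snd u - snd v\<bar> = 1/2"
proof -
  have G: "u \<in> Grid k" "v \<in> Grid k" and n1: "gnorm u v = 1" and ii: "g_integral u \<noteq> g_integral v"
    using assms by (auto simp: g_adj_def)
  obtain a b where ab: "fst (fst u) = of_int a / 2" "snd u = of_int b / 2" "even a = even b"
    "g_integral u = even a" by (rule grid_D[OF G(1)])
  obtain a' b' where ab': "fst (fst v) = of_int a' / 2" "snd v = of_int b' / 2" "even a' = even b'"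
    "g_integral v = even a'" by (rule grid_D[OF G(2)])
  have oa: "odd (a - a')" "odd (a + a')" "odd (b - b')" using ab ab' ii by auto
  have "\<exists>n::int. 2 * tdist (fst u) (fst v) = of_int n \<and> odd n \<and> n \<ge> 0"
  proof (cases "snd (fst u) = snd (fst v)")
    case True
    then have "2 * tdist (fst u) (fst v) = of_int \<bar>a - a'\<bar>" unfolding tdist_def ab(1) ab'(1)
      using two_abs_half by simp
    then show ?thesis using oa by (intro exI[of _ "\<bar>a - a'\<bar>"]) auto
  next
    case False
    then have "2 * tdist (fst u) (fst v) = of_int (a + a')" using ab(1) ab'(1)
      by (simp add: tdist_def field_simps)
    moreover have "a + a' \<ge> 0" using G[THEN Grid_valid, THEN tvalid_nonneg] ab(1) ab'(1) by simp
    ultimately show ?thesis using oa by (intro exI[of _ "a + a'"]) auto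
  qed
  then obtain n::int where n: "2 * tdist (fst u) (fst v) = of_int n" "odd n" "n \<ge> 0" by blast
  have m: "2 * \<bar>snd u - snd v\<bar> = of_int \<bar>b - b'\<bar>" unfolding ab(2) ab'(2) using two_abs_half by simp
  have "of_int (n + \<bar>b - b'\<bar>) = (2::real)" using n1 n m unfolding gnorm_def by simp
  hence s2: "n + \<bar>b - b'\<bar> = 2" by (simp only: of_int_eq_iff)
  have "n = 1" "\<bar>b - b'\<bar> = 1" using s2 n(2,3) oa(3) by presburger+
  thus "tdist (fst u) (fst v) = 1/2" "\<bar>snd u - snd v\<bar> = 1/2" using n(1) m by simp_all
qed

lemma prec_asym: "g_prec k u v \<Longrightarrow> \<not> g_prec k v u"
  by (auto simp: g_prec_def g_adj_def g_odd_def g_even_def)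

lemma prec_cases: assumes "g_prec k u v"
  shows "(g_integral u \<and> g_even u \<and> \<not> g_integral v) \<or> (\<not> g_integral u \<and> g_integral v \<and> g_odd v)"
  using assms by (auto simp: g_prec_def g_adj_def g_odd_def g_even_def)

lemma preceq_cases: assumes "g_preceq k u v"
  shows "u = v \<or> g_prec k u v \<or> (\<exists>c. g_prec k u c \<and> g_prec k c v)"
proof -
  have "(g_prec k)\<^sup>*\<^sup>* u v" using assms by (simp add: g_preceq_def)
  then show ?thesis
  proof (induction rule: rtranclp_induct)
    case base then show ?case by simp
  next
    case (step y z)
    from step.IH show ?case
    proof (elim disjE exE conjE)
      assume "u = y" then show ?thesis using step.hyps(2) by simp
    next
      assume "g_prec k u y" then show ?thesis using step.hyps(2) by blast
    next
      fix c assume "g_prec k u c" "g_prec k c y"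
      then show ?thesis using step.hyps(2) prec_cases[of k u c] prec_cases[of k c y] prec_cases[of k y z]
        by (auto simp: g_odd_def)
    qed
  qed
qed


lemma near_cases: assumes "tvalid k w" "tvalid k xm" "tdist w xm = t"
  "fst w + fst xm = t \<Longrightarrow> fst w = 0"
  shows "fst w = fst xm + t \<or> fst w = fst xm - t"
  using assms by (auto simp: tdist_def tvalid_def abs_if split: if_splits)

lemma same_fst: assumes "tvalid k w" "tvalid k w'" "tvalid k xm" "tdist w xm = t" "tdist w' xm = t"
  "fst w = fst w'" "fst w + fst xm = t \<Longrightarrow> fst w = 0"
  shows "w = w'"
  using assms by (cases w; cases w'; cases xm; auto simp: tdist_def tvalid_def split: if_splits)

lemma dvd_close: assumes "\<bar>a - a'\<bar> < d" "d dvd (a - a')" shows "a = (a'::int)"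
proof (rule ccontr)
  assume "a \<noteq> a'"
  then have "\<bar>d\<bar> \<le> \<bar>a - a'\<bar>" using dvd_imp_le_int[of "a - a'" d] assms(2) by simp
  then show False using assms(1) by simp
qed

lemma grid_eq_gen: assumes "tvalid k w" "tvalid k w'" "tvalid k xm" "fst w = of_int a/2" "fst w' = of_int a'/2"
  "tdist w xm = t" "tdist w' xm = t"
  "fst w + fst xm = t \<Longrightarrow> fst w = 0" "fst w' + fst xm = t \<Longrightarrow> fst w' = 0"
  "4 * t < of_int d" "d dvd (a - a')"
  shows "w = w'"
proof -
  have "fst w = fst xm + t \<or> fst w = fst xm - t" by (rule near_cases[OF assms(1,3,6,8)])
  moreover have "fst w' = fst xm + t \<or> fst w' = fst xm - t" by (rule near_cases[OF assms(2,3,7,9)])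
  ultimately have "2 * \<bar>fst w - fst w'\<bar> \<le> 4 * t" using assms(6) tdist_nonneg[OF assms(1,3)[THEN tvalid_nonneg]]
    by auto
  hence "of_int \<bar>a - a'\<bar> < (of_int d :: real)" using assms(4,5,10) two_abs_half[of a a'] by simp
  hence "\<bar>a - a'\<bar> < d" by (simp only: of_int_less_iff)
  hence "a = a'" using dvd_close assms(11) by blast
  hence "fst w = fst w'" using assms(4,5) by simp
  then show ?thesis using same_fst[OF assms(1,2,3,6,7) _ assms(8)] by simp
qed

lemma real_eq_gen: assumes "y = of_int b/2" "y' = of_int b'/2" "\<bar>y - Y\<bar> = t" "\<bar>y' - Y\<bar> = t"
  "4 * t < of_int d" "d dvd (b - b')"
  shows "y = (y' :: real)"
proof -
  have "2 * \<bar>y - y'\<bar> \<le> 4 * t" using assms(3,4) by (auto simp: abs_if split: if_splits)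
  hence "of_int \<bar>b - b'\<bar> < (of_int d :: real)" using assms(1,2,5) two_abs_half[of b b'] by simp
  hence "\<bar>b - b'\<bar> < d" by (simp only: of_int_less_iff)
  hence "b = b'" using dvd_close assms(6) by blast
  then show ?thesis using assms(1,2) by simp
qed

lemma shapeA: assumes "g_prec k u v" "m = gmid k u v"
  shows "gnorm u v = 1" "tdist (fst u) (fst m) = 1/4" "tdist (fst v) (fst m) = 1/4"
    "\<bar>snd u - snd m\<bar> = 1/4" "\<bar>snd v - snd m\<bar> = 1/4" "\<exists>B. snd m = of_int B / 4 \<and> odd B"
proof -
  have adj: "g_adj k u v" using assms(1) by (simp add: g_prec_def)
  have G: "u \<in> Grid k" "v \<in> Grid k" using adj by (auto simp: g_adj_def)
  note h = adj_half[OF adj]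
  show "gnorm u v = 1" using h by (simp add: gnorm_def)
  note tc = tmid_char[OF G(1)[THEN Grid_valid] G(2)[THEN Grid_valid]]
  show "tdist (fst u) (fst m) = 1/4" "tdist (fst v) (fst m) = 1/4"
    using tc h assms(2) by (simp_all add: gmid_def tdist_sym)
  show "\<bar>snd u - snd m\<bar> = 1/4" "\<bar>snd v - snd m\<bar> = 1/4"
    using h assms(2) by (auto simp: gmid_def abs_if field_simps split: if_splits)
  obtain b where b: "snd u = of_int b / 2" "g_integral u = even b" using grid_D[OF G(1)] by metis
  obtain b' where b': "snd v = of_int b' / 2" "g_integral v = even b'" using grid_D[OF G(2)] by metis
  have "g_integral u \<noteq> g_integral v" using adj by (simp add: g_adj_def)
  hence "odd (b + b')" using b b' by auto
  moreover have "snd m = of_int (b + b') / 4" using assms(2) b b' by (simp add: gmid_def field_simps)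
  ultimately show "\<exists>B. snd m = of_int B / 4 \<and> odd B" by blast
qed


lemma excl_small: fixes w xm :: tpt assumes "fst w = of_int a / 2" "a \<ge> 0" "fst xm \<ge> 0" "t < 1/2" "fst w + fst xm = t"
  shows "fst w = 0"
proof -
  have "of_int a < (1::real)" using assms by simp
  hence "a < 1" by (simp only: of_int_less_iff)
  hence "a = 0" using assms(2) by simp
  thus ?thesis using assms(1) by simp
qed

lemma excl_big: fixes w xm :: tpt assumes "fst w \<ge> 0" "fst xm \<ge> t" "fst w + fst xm = t"
  shows "fst w = 0"
  using assms by simp

lemma uniqA: assumes "w \<in> Grid k" "w' \<in> Grid k" "g_integral w = g_integral w'" "tvalid k (fst m)"
  "tdist (fst w) (fst m) = 1/4" "tdist (fst w') (fst m) = 1/4"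
  "\<bar>snd w - snd m\<bar> = 1/4" "\<bar>snd w' - snd m\<bar> = 1/4"
  shows "w = w'"
proof -
  obtain a b where ab: "fst (fst w) = of_int a / 2" "snd w = of_int b / 2" "even a = even b"
    "g_integral w = even a" "a \<ge> 0" by (rule grid_D[OF assms(1)])
  obtain a' b' where ab': "fst (fst w') = of_int a' / 2" "snd w' = of_int b' / 2" "even a' = even b'"
    "g_integral w' = even a'" "a' \<ge> 0" by (rule grid_D[OF assms(2)])
  have d1: "2 dvd (a - a')" "2 dvd (b - b')" using ab ab' assms(3) by auto
  have xm0: "fst (fst m) \<ge> 0" using assms(4) tvalid_nonneg by blast
  have "snd w = snd w'" by (rule real_eq_gen[OF ab(2) ab'(2) assms(7,8) _ d1(2)]) simp
  moreover have "fst w = fst w'"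
    by (rule grid_eq_gen[OF assms(1,2)[THEN Grid_valid] assms(4) ab(1) ab'(1) assms(5,6) _ _ _ d1(1)])
      (use excl_small[OF ab(1) ab(5) xm0] excl_small[OF ab'(1) ab'(5) xm0] in auto)
  ultimately show ?thesis by (simp add: prod_eq_iff)
qed


lemma half_lin: "((of_int a / 2 :: real) = of_int b / 2 + of_int j / 2) \<longleftrightarrow> a = b + j"
proof -
  have "((of_int a / 2 :: real) = of_int b / 2 + of_int j / 2) \<longleftrightarrow> (of_int a :: real) = of_int (b + j)"
    by (simp add: field_simps)
  also have "\<dots> \<longleftrightarrow> a = b + j" by (simp only: of_int_eq_iff)
  finally show ?thesis .
qed

lemma abs_half_int: "\<bar>(of_int a / 2 :: real) - of_int b / 2\<bar> = of_int j / 2 \<longleftrightarrow> \<bar>a - b\<bar> = j"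
proof -
  have "\<bar>(of_int a / 2 :: real) - of_int b / 2\<bar> = of_int j / 2 \<longleftrightarrow> 2 * \<bar>(of_int a / 2 :: real) - of_int b / 2\<bar> = of_int j"
    by auto
  also have "\<dots> \<longleftrightarrow> (of_int \<bar>a - b\<bar> :: real) = of_int j" by (simp only: two_abs_half)
  also have "\<dots> \<longleftrightarrow> \<bar>a - b\<bar> = j" by (simp only: of_int_eq_iff)
  finally show ?thesis .
qed

lemma shapeB: assumes "g_prec k u c" "g_prec k c v" "m = gmid k u v"
  shows "gnorm u v = 1 \<and> g_even u \<and> g_odd v \<and>
    ((snd u = snd m \<and> snd v = snd m \<and> tdist (fst u) (fst m) = 1/2 \<and> tdist (fst v) (fst m) = 1/2 \<and>
      (\<exists>a b. fst (fst m) = of_int a / 2 \<and> odd a \<and> snd m = of_int b / 2 \<and> even b)) \<or>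
     (fst u = fst m \<and> fst v = fst m \<and> \<bar>snd u - snd m\<bar> = 1/2 \<and> \<bar>snd v - snd m\<bar> = 1/2 \<and>
      (\<exists>a b. fst (fst m) = of_int a / 2 \<and> even a \<and> snd m = of_int b / 2 \<and> odd b)))"
proof -
  have adj1: "g_adj k u c" and adj2: "g_adj k c v" using assms(1,2) by (simp_all add: g_prec_def)
  have G: "u \<in> Grid k" "c \<in> Grid k" "v \<in> Grid k" using adj1 adj2 by (auto simp: g_adj_def)
  have V: "tvalid k (fst u)" "tvalid k (fst c)" "tvalid k (fst v)" using G Grid_valid by blast+
  have ev: "g_integral u" "g_even u" "\<not> g_integral c" "g_integral v" "g_odd v"
    using prec_cases[OF assms(1)] prec_cases[OF assms(2)] by (auto simp: g_odd_def)
  obtain au bu where u: "fst (fst u) = of_int au / 2" "snd u = of_int bu / 2" "even au = even bu"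
    "g_integral u = even au" "g_even u = (even au \<and> 4 dvd (au - bu))" "au \<ge> 0" by (rule grid_D[OF G(1)])
  obtain ac bc where c: "fst (fst c) = of_int ac / 2" "snd c = of_int bc / 2" "even ac = even bc"
    "g_integral c = even ac" "ac \<ge> 0" by (rule grid_D[OF G(2)])
  obtain av bv where v: "fst (fst v) = of_int av / 2" "snd v = of_int bv / 2" "even av = even bv"
    "g_integral v = even av" "g_even v = (even av \<and> 4 dvd (av - bv))" "av \<ge> 0" by (rule grid_D[OF G(3)])
  have I1: "even au" "4 dvd (au - bu)" "odd ac" "odd bc" "even av" "even bv" "\<not> 4 dvd (av - bv)"
    using ev u c v by (auto simp: g_odd_def)
  note h1 = adj_half[OF adj1] and h2 = adj_half[OF adj2]
  have bb: "\<bar>bu - bc\<bar> = 1" "\<bar>bc - bv\<bar> = 1"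
    using h1(2) h2(2) u(2) c(2) v(2) abs_half_int[of bu bc 1] abs_half_int[of bc bv 1] by simp_all
  have ac1: "fst (fst c) \<ge> 1/2"
  proof -
    have "ac \<ge> 1" using I1(3) c(5) by presburger
    hence "(of_int ac :: real) \<ge> 1" by simp
    thus ?thesis using c(1) by simp
  qed
  have exu: "fst (fst u) + fst (fst c) = 1/2 \<Longrightarrow> fst (fst u) = 0"
    using excl_big[where w="fst u" and xm="fst c" and t="1/2"] ac1 V(1) tvalid_nonneg by blast
  have h2': "tdist (fst v) (fst c) = 1/2" using h2(1) tdist_sym by metis
  have exv: "fst (fst v) + fst (fst c) = 1/2 \<Longrightarrow> fst (fst v) = 0"
    using excl_big[where w="fst v" and xm="fst c" and t="1/2"] ac1 V(3) tvalid_nonneg by blast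
  have "fst (fst u) = fst (fst c) + 1/2 \<or> fst (fst u) = fst (fst c) - 1/2"
    by (rule near_cases[OF V(1) V(2) h1(1) exu])
  hence au: "au = ac + 1 \<or> au = ac + (-1)"
    using u(1) c(1) half_lin[of au ac 1] half_lin[of au ac "-1"] by auto
  have "fst (fst v) = fst (fst c) + 1/2 \<or> fst (fst v) = fst (fst c) - 1/2"
    by (rule near_cases[OF V(3) V(2) h2' exv])
  hence av: "av = ac + 1 \<or> av = ac + (-1)"
    using v(1) c(1) half_lin[of av ac 1] half_lin[of av ac "-1"] by auto
  show ?thesis
  proof (cases "bu = bv")
    case True
    have "au \<noteq> av" using True I1 by auto
    hence "\<bar>au - av\<bar> = 2" using au av by auto
    hence d1: "\<bar>fst (fst u) - fst (fst v)\<bar> = 1" using u(1) v(1) abs_half_int[of au av 2] by simp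
    have "tdist (fst u) (fst v) = 1"
      using tdist_ge[of "fst u" "fst v"] tdist_tri[of "fst u" "fst c" "fst v"] V[THEN tvalid_nonneg] h1 h2 d1
      by simp
    hence tm: "tmid k (fst u) (fst v) = fst c"
      using tmid_eq[OF V(1) V(3) V(2)] h1(1) h2(1) by simp
    have m: "m = (fst c, snd u)" using assms(3) tm True u(2) v(2) by (simp add: gmid_def)
    have "gnorm u v = 1" using \<open>tdist (fst u) (fst v) = 1\<close> True u(2) v(2) by (simp add: gnorm_def)
    moreover have "even bu" using I1(1) u(3) by simp
    ultimately show ?thesis using m ev h1 h2' True u(2) v(2) c(1) I1(3) by auto
  next
    case False
    have "au = av" using False I1 au av bb by presburger
    hence "fst (fst u) = fst (fst v)" using u(1) v(1) by simp
    hence xe: "fst u = fst v" using same_fst[OF V(1) V(3) V(2) h1(1) h2' _ exu] by simp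
    have "bu + bv = 2 * bc" using False bb by auto
    hence ys: "(snd u + snd v) / 2 = snd c" using u(2) v(2) c(2)
      by (simp add: field_simps)
    have m: "m = (fst u, snd c)" using assms(3) xe ys tmid_self[OF V(1)] by (simp add: gmid_def)
    have "\<bar>snd u - snd v\<bar> = 1" using h1(2) h2(2) ys by (auto simp: abs_if field_simps split: if_splits)
    hence "gnorm u v = 1" using xe by (simp add: gnorm_def tdist_self)
    moreover have "\<bar>snd v - snd c\<bar> = 1/2" using h2(2) by (simp add: abs_minus_commute)
    ultimately show ?thesis using m ev h1 xe u(1) I1(1) I1(4) c(2) by auto
  qed
qed


lemma par4: assumes "w \<in> Grid k" "w' \<in> Grid k" "(g_even w \<and> g_even w') \<or> (g_odd w \<and> g_odd w')"
  obtains a b a' b' where "fst (fst w) = of_int a / 2" "snd w = of_int b / 2" "a \<ge> 0"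
    "fst (fst w') = of_int a' / 2" "snd w' = of_int b' / 2" "a' \<ge> 0"
    "4 dvd ((a - b) - (a' - b'))"
proof -
  obtain a b where ab: "fst (fst w) = of_int a / 2" "snd w = of_int b / 2" "even a = even b"
    "g_integral w = even a" "g_even w = (even a \<and> 4 dvd (a - b))" "a \<ge> 0" by (rule grid_D[OF assms(1)])
  obtain a' b' where ab': "fst (fst w') = of_int a' / 2" "snd w' = of_int b' / 2" "even a' = even b'"
    "g_integral w' = even a'" "g_even w' = (even a' \<and> 4 dvd (a' - b'))" "a' \<ge> 0" by (rule grid_D[OF assms(2)])
  have "4 dvd ((a - b) - (a' - b'))"
    using assms(3) ab ab' unfolding g_odd_def by auto presburger
  then show ?thesis using that ab ab' by blast
qed

lemma B1_uniq: assumes "w \<in> Grid k" "w' \<in> Grid k" "(g_even w \<and> g_even w') \<or> (g_odd w \<and> g_odd w')"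
  "snd w = snd m" "snd w' = snd m" "tdist (fst w) (fst m) = 1/2" "tdist (fst w') (fst m) = 1/2"
  "tvalid k (fst m)" "fst (fst m) \<ge> 1/2"
  shows "w = w'"
proof -
  obtain a b a' b' where ab: "fst (fst w) = of_int a / 2" "snd w = of_int b / 2" "a \<ge> 0"
    "fst (fst w') = of_int a' / 2" "snd w' = of_int b' / 2" "a' \<ge> 0"
    "4 dvd ((a - b) - (a' - b'))" by (rule par4[OF assms(1,2,3)])
  have "b = b'" using ab(2,5) assms(4,5) by simp
  hence d: "4 dvd (a - a')" using ab(7) by simp
  have V: "tvalid k (fst w)" "tvalid k (fst w')" using assms(1,2) Grid_valid by blast+
  have "fst w = fst w'"
    by (rule grid_eq_gen[OF V assms(8) ab(1) ab(4) assms(6,7) _ _ _ d])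
      (use excl_big[where w="fst w" and xm="fst m" and t="1/2"] excl_big[where w="fst w'" and xm="fst m" and t="1/2"]
        assms(9) V[THEN tvalid_nonneg] in auto)
  then show ?thesis using assms(4,5) by (simp add: prod_eq_iff)
qed

lemma B2_uniq: assumes "w \<in> Grid k" "w' \<in> Grid k" "(g_even w \<and> g_even w') \<or> (g_odd w \<and> g_odd w')"
  "fst w = fst m" "fst w' = fst m" "\<bar>snd w - snd m\<bar> = 1/2" "\<bar>snd w' - snd m\<bar> = 1/2"
  shows "w = w'"
proof -
  obtain a b a' b' where ab: "fst (fst w) = of_int a / 2" "snd w = of_int b / 2" "a \<ge> 0"
    "fst (fst w') = of_int a' / 2" "snd w' = of_int b' / 2" "a' \<ge> 0"
    "4 dvd ((a - b) - (a' - b'))" by (rule par4[OF assms(1,2,3)])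
  have "a = a'" using ab(1,4) assms(4,5) by simp
  hence d: "4 dvd (b - b')" using ab(7) by (simp add: dvd_diff_commute)
  have "snd w = snd w'" by (rule real_eq_gen[OF ab(2) ab(5) assms(6,7) _ d]) simp
  then show ?thesis using assms(4,5) by (simp add: prod_eq_iff)
qed


definition isR :: "gpt \<Rightarrow> bool" where
  "isR m \<longleftrightarrow> (\<exists>a b. fst (fst m) = of_int a / 2 \<and> snd m = of_int b / 2 \<and> even a = even b)"
definition isA :: "gpt \<Rightarrow> bool" where
  "isA m \<longleftrightarrow> (\<exists>B. snd m = of_int B / 4 \<and> odd B)"
definition isB1 :: "gpt \<Rightarrow> bool" where
  "isB1 m \<longleftrightarrow> (\<exists>a b. fst (fst m) = of_int a / 2 \<and> odd a \<and> snd m = of_int b / 2 \<and> even b)"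
definition isB2 :: "gpt \<Rightarrow> bool" where
  "isB2 m \<longleftrightarrow> (\<exists>a b. fst (fst m) = of_int a / 2 \<and> even a \<and> snd m = of_int b / 2 \<and> odd b)"

lemma quarter_half: "of_int B / 4 = (of_int b / 2 :: real) \<Longrightarrow> odd B \<Longrightarrow> False"
proof -
  assume "of_int B / 4 = (of_int b / 2 :: real)" "odd B"
  then have "(of_int B :: real) = of_int (2 * b)" by (simp add: field_simps)
  then have "B = 2 * b" by (simp only: of_int_eq_iff)
  then show False using \<open>odd B\<close> by simp
qed

lemma excl_RA: "isR m \<Longrightarrow> isA m \<Longrightarrow> False"
  unfolding isR_def isA_def using quarter_half by metis
lemma excl_RB1: "isR m \<Longrightarrow> isB1 m \<Longrightarrow> False"
  unfolding isR_def isB1_def by auto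
lemma excl_RB2: "isR m \<Longrightarrow> isB2 m \<Longrightarrow> False"
  unfolding isR_def isB2_def by auto
lemma excl_AB1: "isA m \<Longrightarrow> isB1 m \<Longrightarrow> False"
  unfolding isA_def isB1_def using quarter_half by metis
lemma excl_AB2: "isA m \<Longrightarrow> isB2 m \<Longrightarrow> False"
  unfolding isA_def isB2_def using quarter_half by metis
lemma excl_B12: "isB1 m \<Longrightarrow> isB2 m \<Longrightarrow> False"
  unfolding isB1_def isB2_def by auto

lemma pair_shape: assumes "u \<in> Grid k" "v \<in> Grid k" "g_preceq k u v" "m = gmid k u v"
  shows "(u = v \<and> m = u \<and> isR m) \<or> (g_prec k u v \<and> isA m) \<or>
    ((\<exists>c. g_prec k u c \<and> g_prec k c v) \<and> (isB1 m \<or> isB2 m))"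
proof -
  from preceq_cases[OF assms(3)] show ?thesis
  proof (elim disjE exE conjE)
    assume e: "u = v"
    have "m = u" using e assms(4) gmid_self[OF Grid_valid[OF assms(1)]] by simp
    moreover have "isR m" using grid_D[OF assms(1)] \<open>m = u\<close> unfolding isR_def by metis
    ultimately show ?thesis using e by simp
  next
    assume p: "g_prec k u v"
    have "isA m" using shapeA(6)[OF p assms(4)] unfolding isA_def .
    then show ?thesis using p by simp
  next
    fix c assume p: "g_prec k u c" "g_prec k c v"
    have "isB1 m \<or> isB2 m" using shapeB[OF p assms(4)] unfolding isB1_def isB2_def by blast
    then show ?thesis using p by blast
  qed
qed

lemma pair_uniq: assumes "u \<in> Grid k" "v \<in> Grid k" "g_preceq k u v"
  "u' \<in> Grid k" "v' \<in> Grid k" "g_preceq k u' v'" "gmid k u v = gmid k u' v'"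
  shows "u = u' \<and> v = v'"
proof -
  define m where "m = gmid k u v"
  have m': "m = gmid k u' v'" using assms(7) m_def by simp
  have Vm: "tvalid k (fst m)" using gmid_char[OF assms(1,2)[THEN Grid_valid]] m_def by simp
  note s1 = pair_shape[OF assms(1,2,3) m_def] and s2 = pair_shape[OF assms(4,5,6) m']
  have AA: ?thesis if p: "g_prec k u v" "g_prec k u' v'"
  proof -
    note a1 = shapeA[OF p(1) m_def] and a2 = shapeA[OF p(2) m']
    have i1: "g_integral u \<noteq> g_integral v" "g_integral u' \<noteq> g_integral v'"
      using p by (auto simp: g_prec_def g_adj_def)
    show ?thesis
    proof (cases "g_integral u = g_integral u'")
      case True
      have "u = u'" by (rule uniqA[OF assms(1,4) True Vm a1(2) a2(2) a1(4) a2(4)])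
      moreover have "v = v'" by (rule uniqA[OF assms(2,5) _ Vm a1(3) a2(3) a1(5) a2(5)]) (use True i1 in auto)
      ultimately show ?thesis ..
    next
      case False
      have "u = v'" by (rule uniqA[OF assms(1,5) _ Vm a1(2) a2(3) a1(4) a2(5)]) (use False i1 in auto)
      moreover have "v = u'" by (rule uniqA[OF assms(2,4) _ Vm a1(3) a2(2) a1(5) a2(4)]) (use False i1 in auto)
      ultimately show ?thesis using p prec_asym by blast
    qed
  qed
  have BB: ?thesis if p: "g_prec k u c" "g_prec k c v" "g_prec k u' c'" "g_prec k c' v'" for c c'
  proof -
    note b1 = shapeB[OF p(1,2) m_def] and b2 = shapeB[OF p(3,4) m']
    have ev: "g_even u \<and> g_even u'" "g_odd v \<and> g_odd v'" using b1 b2 by auto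
    show ?thesis
    proof (cases "isB1 m")
      case True
      then have nb2: "\<not> isB2 m" using excl_B12 by blast
      obtain a where a: "fst (fst m) = of_int a / 2" "odd a" using True unfolding isB1_def by blast
      have "a \<ge> 0" using Vm[THEN tvalid_nonneg] a(1) by simp
      hence "a \<ge> 1" using a(2) by presburger
      hence "(of_int a :: real) \<ge> 1" by simp
      hence ge: "fst (fst m) \<ge> 1/2" using a(1) by simp
      have c1: "snd u = snd m \<and> snd v = snd m \<and> tdist (fst u) (fst m) = 1/2 \<and> tdist (fst v) (fst m) = 1/2"
        using b1 nb2 unfolding isB2_def by blast
      have c2: "snd u' = snd m \<and> snd v' = snd m \<and> tdist (fst u') (fst m) = 1/2 \<and> tdist (fst v') (fst m) = 1/2"
        using b2 nb2 unfolding isB2_def by blast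
      have "u = u'" using B1_uniq[OF assms(1,4) _ _ _ _ _ Vm ge] ev c1 c2 by blast
      moreover have "v = v'" using B1_uniq[OF assms(2,5) _ _ _ _ _ Vm ge] ev c1 c2 by blast
      ultimately show ?thesis ..
    next
      case False
      have c1: "fst u = fst m \<and> fst v = fst m \<and> \<bar>snd u - snd m\<bar> = 1/2 \<and> \<bar>snd v - snd m\<bar> = 1/2"
        using b1 False unfolding isB1_def by blast
      have c2: "fst u' = fst m \<and> fst v' = fst m \<and> \<bar>snd u' - snd m\<bar> = 1/2 \<and> \<bar>snd v' - snd m\<bar> = 1/2"
        using b2 False unfolding isB1_def by blast
      have "u = u'" using B2_uniq[OF assms(1,4)] ev c1 c2 by blast
      moreover have "v = v'" using B2_uniq[OF assms(2,5)] ev c1 c2 by blast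
      ultimately show ?thesis ..
    qed
  qed
  from s1 s2 show ?thesis
    using AA BB excl_RA excl_RB1 excl_RB2 excl_AB1 excl_AB2 by metis
qed



lemma tdist_mk_same: "t \<ge> 0 \<Longrightarrow> tdist (mk r s) (t, s) = \<bar>r - t\<bar>"
  by (auto simp: mk_def tdist_def)

lemma valid_mk: "tvalid k (\<rho>, s) \<Longrightarrow> r \<ge> 0 \<Longrightarrow> tvalid k (mk r s)"
  by (auto simp: mk_def tvalid_def)

lemma valid_pos: "tvalid k (\<rho>, s) \<Longrightarrow> r > 0 \<Longrightarrow> tvalid k (r, s)"
  by (auto simp: tvalid_def)

lemma quarter_abs: "\<bar>of_int i / 2 - (of_int i + of_int h) / 4 :: real\<bar> = of_int \<bar>i - h\<bar> / 4"
  "\<bar>(of_int i + of_int h) / 4 - of_int h / 2 :: real\<bar> = of_int \<bar>i - h\<bar> / 4"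
  by (simp_all add: of_int_abs abs_if field_simps)

lemma caseA_gen:
  assumes V: "tvalid k (\<rho>, s)" and r: "\<rho> = (of_int i + of_int h) / 4" and y: "Y = (of_int bi + of_int bh) / 4"
    and I: "even i" "odd h" "\<bar>i - h\<bar> = 1" "i \<ge> 0" "h \<ge> 1" "even bi" "odd bh" "\<bar>bi - bh\<bar> = 1"
  shows "\<exists>u v. u \<in> Grid k \<and> v \<in> Grid k \<and> g_preceq k u v \<and> gmid k u v = ((\<rho>, s), Y)"
proof -
  define xI where "xI = mk (of_int i / 2) s"
  define xH where "xH = (of_int h / 2 :: real, s)"
  define pI where "pI = (xI, of_int bi / 2 :: real)"
  define pH where "pH = (xH, of_int bh / 2 :: real)"
  have VI: "tvalid k xI" unfolding xI_def by (rule valid_mk[OF V]) (use I(4) in simp)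
  have VH: "tvalid k xH" unfolding xH_def by (rule valid_pos[OF V]) (use I(5) in simp)
  have GI: "pI \<in> Grid k" "g_integral pI" and GIe: "g_even pI = (4 dvd (i - bi))"
    using grid_I[OF VI, of i "of_int bi / 2" bi] I unfolding pI_def xI_def by auto
  have GH: "pH \<in> Grid k" "\<not> g_integral pH"
    using grid_I[OF VH, of h "of_int bh / 2" bh] I unfolding pH_def xH_def by auto
  have t1: "tdist xI xH = 1/2" unfolding xI_def xH_def
    using tdist_mk_same[of "of_int h / 2" "of_int i / 2" s] I(5) abs_half_int[of i h 1] I(3) by simp
  have "\<rho> \<ge> 0" using V[THEN tvalid_nonneg] by simp
  then have t2: "tdist xI (\<rho>, s) = 1/4" unfolding xI_def
    using tdist_mk_same[of \<rho> "of_int i / 2" s] quarter_abs(1)[of i h] I(3) unfolding r by simp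
  have t3: "tdist (\<rho>, s) xH = 1/4" unfolding xH_def
    using quarter_abs(2)[of i h] I(3) unfolding r by (simp add: tdist_def)
  have ty: "\<bar>of_int bi / 2 - of_int bh / 2 :: real\<bar> = 1/2" using abs_half_int[of bi bh 1] I(8) by simp
  have yy: "(of_int bi / 2 + of_int bh / 2) / 2 = Y" "(of_int bh / 2 + of_int bi / 2) / 2 = Y" using y by (simp_all add: field_simps)
  have n1: "gnorm pI pH = 1" "gnorm pH pI = 1" using t1 ty unfolding pI_def pH_def gnorm_def
    by (simp_all add: tdist_sym abs_minus_commute)
  have adj: "g_adj k pI pH" "g_adj k pH pI" using GI GH n1 by (auto simp: g_adj_def)
  have m1: "tmid k xI xH = (\<rho>, s)" by (rule tmid_eq[OF VI VH V]) (use t1 t2 t3 in simp_all)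
  have t1': "tdist xH xI = 1/2" and t2': "tdist xH (\<rho>, s) = 1/4" and t3': "tdist (\<rho>, s) xI = 1/4"
    using t1 t2 t3 tdist_sym by metis+
  have m2: "tmid k xH xI = (\<rho>, s)" by (rule tmid_eq[OF VH VI V]) (use t1' t2' t3' in simp_all)
  have g1: "gmid k pI pH = ((\<rho>, s), Y)" "gmid k pH pI = ((\<rho>, s), Y)"
    unfolding gmid_def pI_def pH_def using m1 m2 yy by simp_all
  show ?thesis
  proof (cases "g_even pI")
    case True
    then have "g_prec k pI pH" using adj by (simp add: g_prec_def)
    then have "g_preceq k pI pH" unfolding g_preceq_def by simp
    then show ?thesis using GI GH g1 by blast
  next
    case False
    then have "g_prec k pH pI" using adj GI by (simp add: g_prec_def g_odd_def)
    then have "g_preceq k pH pI" unfolding g_preceq_def by simp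
    then show ?thesis using GI GH g1 by blast
  qed
qed


lemma prec_step2: "g_prec k u c \<Longrightarrow> g_prec k c v \<Longrightarrow> g_preceq k u v"
  unfolding g_preceq_def by (meson rtranclp.rtrancl_into_rtrancl rtranclp.rtrancl_refl)

lemma caseB1_gen:
  assumes V: "tvalid k (\<rho>, s)" and r: "\<rho> = of_int (a + 1) / 2" and y: "Y = of_int b / 2"
    and I: "even a" "a \<ge> 0" "even b"
  shows "\<exists>u v. u \<in> Grid k \<and> v \<in> Grid k \<and> g_preceq k u v \<and> gmid k u v = ((\<rho>, s), Y)"
proof -
  define xm where "xm = mk (of_int a / 2) s"
  define xp where "xp = (of_int (a + 2) / 2 :: real, s)"
  define xc where "xc = (of_int (a + 1) / 2 :: real, s)"
  define pm where "pm = (xm, of_int b / 2 :: real)"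
  define pp where "pp = (xp, of_int b / 2 :: real)"
  define pc where "pc = (xc, of_int (b + 1) / 2 :: real)"
  have Vm: "tvalid k xm" unfolding xm_def by (rule valid_mk[OF V]) (use I(2) in simp)
  have Vp: "tvalid k xp" unfolding xp_def by (rule valid_pos[OF V]) (use I(2) in simp)
  have Vc: "tvalid k xc" unfolding xc_def by (rule valid_pos[OF V]) (use I(2) in simp)
  have Gm: "pm \<in> Grid k" "g_integral pm" "g_even pm = (4 dvd (a - b))"
    using grid_I[OF Vm, of a "of_int b / 2" b] I unfolding pm_def xm_def by auto
  have Gp: "pp \<in> Grid k" "g_integral pp" "g_even pp = (4 dvd (a + 2 - b))"
    using grid_I[OF Vp, of "a + 2" "of_int b / 2" b] I unfolding pp_def xp_def by auto
  have Gc: "pc \<in> Grid k" "\<not> g_integral pc"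
    using grid_I[OF Vc, of "a + 1" "of_int (b + 1) / 2" "b + 1"] I unfolding pc_def xc_def by auto
  have t1: "tdist xm xc = 1/2" unfolding xm_def xc_def
    using tdist_mk_same[of "of_int (a + 1) / 2" "of_int a / 2" s] I(2) abs_half_int[of a "a + 1" 1] by simp
  have t2: "tdist xc xp = 1/2" unfolding xp_def xc_def
    using abs_half_int[of "a + 1" "a + 2" 1] by (simp add: tdist_def)
  have t3: "tdist xm xp = 1" unfolding xm_def xp_def
    using tdist_mk_same[of "of_int (a + 2) / 2" "of_int a / 2" s] I(2) abs_half_int[of a "a + 2" 2] by simp
  have ty: "\<bar>of_int b / 2 - of_int (b + 1) / 2 :: real\<bar> = 1/2" using abs_half_int[of b "b + 1" 1] by simp
  have e: "\<bar>of_int b / 2 - of_int (b + 1) / 2 :: real\<bar> = 1/2" "\<bar>of_int (b + 1) / 2 - of_int b / 2 :: real\<bar> = 1/2"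
    by (simp_all add: abs_if field_simps)
  have t12: "tdist xc xm = 1/2" "tdist xp xc = 1/2" using t1 t2 tdist_sym by metis+
  have n1: "gnorm pm pc = 1" "gnorm pc pm = 1" "gnorm pp pc = 1" "gnorm pc pp = 1"
    unfolding pm_def pc_def pp_def gnorm_def fst_conv snd_conv using t1 t2 t12 e by (simp_all add: field_simps)
  have adj: "g_adj k pm pc" "g_adj k pc pm" "g_adj k pp pc" "g_adj k pc pp"
    using Gm Gp Gc n1 by (auto simp: g_adj_def)
  have t1': "tdist xc xm = 1/2" "tdist xp xc = 1/2" "tdist xp xm = 1" using t1 t2 t3 tdist_sym by metis+
  have m1: "tmid k xm xp = (\<rho>, s)" unfolding r xc_def[symmetric]
    by (rule tmid_eq[OF Vm Vp Vc]) (use t1 t2 t3 in simp_all)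
  have m2: "tmid k xp xm = (\<rho>, s)" unfolding r xc_def[symmetric]
    by (rule tmid_eq[OF Vp Vm Vc]) (use t1' in simp_all)
  have g1: "gmid k pm pp = ((\<rho>, s), Y)" "gmid k pp pm = ((\<rho>, s), Y)"
    unfolding gmid_def pm_def pp_def using m1 m2 y by simp_all
  show ?thesis
  proof (cases "4 dvd (a - b)")
    case True
    then have "\<not> 4 dvd (a + 2 - b)" by presburger
    then have "g_prec k pm pc" "g_prec k pc pp" using adj Gm Gp True by (simp_all add: g_prec_def g_odd_def)
    then show ?thesis using Gm Gp g1 prec_step2 by blast
  next
    case False
    then have "4 dvd (a + 2 - b)" using I by presburger
    then have "g_prec k pp pc" "g_prec k pc pm" using adj Gm Gp False by (simp_all add: g_prec_def g_odd_def)
    then show ?thesis using Gm Gp g1 prec_step2 by blast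
  qed
qed

lemma caseB2_gen:
  assumes V: "tvalid k (\<rho>, s)" and r: "\<rho> = of_int a / 2" and y: "Y = of_int (b + 1) / 2"
    and I: "even a" "a \<ge> 0" "even b"
  shows "\<exists>u v. u \<in> Grid k \<and> v \<in> Grid k \<and> g_preceq k u v \<and> gmid k u v = ((\<rho>, s), Y)"
proof -
  define x0 where "x0 = (\<rho>, s)"
  define xc where "xc = (of_int (a + 1) / 2 :: real, s)"
  define pm where "pm = (x0, of_int b / 2 :: real)"
  define pp where "pp = (x0, of_int (b + 2) / 2 :: real)"
  define pc where "pc = (xc, of_int (b + 1) / 2 :: real)"
  have V0: "tvalid k x0" using V x0_def by simp
  have Vc: "tvalid k xc" unfolding xc_def by (rule valid_pos[OF V]) (use I(2) in simp)
  have Gm: "pm \<in> Grid k" "g_integral pm" "g_even pm = (4 dvd (a - b))"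
    using grid_I[OF V0, of a "of_int b / 2" b] I r unfolding pm_def x0_def by auto
  have Gp: "pp \<in> Grid k" "g_integral pp" "g_even pp = (4 dvd (a - (b + 2)))"
    using grid_I[OF V0, of a "of_int (b + 2) / 2" "b + 2"] I r unfolding pp_def x0_def by auto
  have Gc: "pc \<in> Grid k" "\<not> g_integral pc"
    using grid_I[OF Vc, of "a + 1" "of_int (b + 1) / 2" "b + 1"] I unfolding pc_def xc_def by auto
  have t1: "tdist x0 xc = 1/2" unfolding x0_def xc_def r
    using abs_half_int[of a "a + 1" 1] by (simp add: tdist_def)
  have ty: "\<bar>of_int b / 2 - of_int (b + 1) / 2 :: real\<bar> = 1/2" "\<bar>of_int (b + 2) / 2 - of_int (b + 1) / 2 :: real\<bar> = 1/2"
    using abs_half_int[of b "b + 1" 1] abs_half_int[of "b + 2" "b + 1" 1] by simp_all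
  have e: "\<bar>of_int b / 2 - of_int (b + 1) / 2 :: real\<bar> = 1/2" "\<bar>of_int (b + 1) / 2 - of_int b / 2 :: real\<bar> = 1/2"
    "\<bar>of_int (b + 2) / 2 - of_int (b + 1) / 2 :: real\<bar> = 1/2" "\<bar>of_int (b + 1) / 2 - of_int (b + 2) / 2 :: real\<bar> = 1/2"
    by (simp_all add: abs_if field_simps)
  have t12: "tdist xc x0 = 1/2" using t1 tdist_sym by metis
  have n1: "gnorm pm pc = 1" "gnorm pc pm = 1" "gnorm pp pc = 1" "gnorm pc pp = 1"
    unfolding pm_def pc_def pp_def gnorm_def fst_conv snd_conv using t1 t12 e by (simp_all add: field_simps)
  have adj: "g_adj k pm pc" "g_adj k pc pm" "g_adj k pp pc" "g_adj k pc pp"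
    using Gm Gp Gc n1 by (auto simp: g_adj_def)
  have yy: "(of_int b / 2 + of_int (b + 2) / 2) / 2 = Y" "(of_int (b + 2) / 2 + of_int b / 2) / 2 = Y"
    using y by (simp_all add: field_simps)
  have g1: "gmid k pm pp = ((\<rho>, s), Y)" "gmid k pp pm = ((\<rho>, s), Y)"
    unfolding gmid_def pm_def pp_def using tmid_self[OF V0] yy x0_def by simp_all
  show ?thesis
  proof (cases "4 dvd (a - b)")
    case True
    then have "\<not> 4 dvd (a - (b + 2))" by presburger
    then have "g_prec k pm pc" "g_prec k pc pp" using adj Gm Gp True by (simp_all add: g_prec_def g_odd_def)
    then show ?thesis using Gm Gp g1 prec_step2 by blast
  next
    case False
    then have "4 dvd (a - (b + 2))" using I by presburger
    then have "g_prec k pp pc" "g_prec k pc pm" using adj Gm Gp False by (simp_all add: g_prec_def g_odd_def)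
    then show ?thesis using Gm Gp g1 prec_step2 by blast
  qed
qed

lemma caseR_gen:
  assumes V: "tvalid k (\<rho>, s)" and r: "\<rho> = of_int a / 2" and y: "Y = of_int b / 2" and I: "even a = even b"
  shows "\<exists>u v. u \<in> Grid k \<and> v \<in> Grid k \<and> g_preceq k u v \<and> gmid k u v = ((\<rho>, s), Y)"
proof -
  have G: "((\<rho>, s), Y) \<in> Grid k" by (rule grid_I(1)[OF V _ y I]) (simp add: r)
  moreover have "gmid k ((\<rho>, s), Y) ((\<rho>, s), Y) = ((\<rho>, s), Y)" using gmid_self[of k "((\<rho>, s), Y)"] V by simp
  moreover have "g_preceq k ((\<rho>, s), Y) ((\<rho>, s), Y)" by (simp add: g_preceq_def)
  ultimately show ?thesis by blast
qed


lemma exist_pair: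
  assumes V: "tvalid k (\<rho>, s)" and r: "\<rho> = of_int A / 4" and y: "Y = of_int B / 4" and P: "even A = even B"
  shows "\<exists>u v. u \<in> Grid k \<and> v \<in> Grid k \<and> g_preceq k u v \<and> gmid k u v = ((\<rho>, s), Y)"
proof -
  have "\<rho> \<ge> 0" using V[THEN tvalid_nonneg] by simp
  hence A0: "A \<ge> 0" using r by simp
  show ?thesis
  proof (cases "odd A")
    case True
    obtain i h where ih: "even i" "odd h" "\<bar>i - h\<bar> = 1" "i \<ge> 0" "h \<ge> 1" "A = i + h"
    proof -
      have "\<exists>i h. even i \<and> odd h \<and> \<bar>i - h\<bar> = 1 \<and> i \<ge> 0 \<and> h \<ge> 1 \<and> A = i + h"
        using True A0 by presburger
      then show ?thesis using that by blast
    qed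
    obtain bi bh where bb: "even bi" "odd bh" "\<bar>bi - bh\<bar> = 1" "B = bi + bh"
    proof -
      have "\<exists>bi bh. even bi \<and> odd bh \<and> \<bar>bi - bh\<bar> = 1 \<and> B = bi + bh"
        using True P by presburger
      then show ?thesis using that by blast
    qed
    show ?thesis
      by (rule caseA_gen[OF V _ _ ih(1-5) bb(1-3)]) (simp_all add: r y ih(6) bb(4))
  next
    case False
    then have eB: "even B" using P by simp
    show ?thesis
    proof (cases "A mod 4 = B mod 4")
      case True
      obtain a b where ab: "A = 2 * a" "B = 2 * b" "even a = even b"
      proof -
        have "\<exists>a b. A = 2 * a \<and> B = 2 * b \<and> even a = even b" using True False eB by presburger
        then show ?thesis using that by blast
      qed
      show ?thesis by (rule caseR_gen[OF V _ _ ab(3)]) (simp_all add: r y ab(1,2))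
    next
      case F2: False
      show ?thesis
      proof (cases "A mod 4 = 2")
        case True
        obtain a b where ab: "A = 2 * a + 2" "B = 2 * b" "even a" "even b" "a \<ge> 0"
        proof -
          have "\<exists>a b. A = 2 * a + 2 \<and> B = 2 * b \<and> even a \<and> even b \<and> a \<ge> 0" using True F2 False eB A0 by presburger
          then show ?thesis using that by blast
        qed
        show ?thesis by (rule caseB1_gen[OF V _ _ ab(3,5,4)]) (simp_all add: r y ab(1,2) field_simps)
      next
        case F3: False
        obtain a b where ab: "A = 2 * a" "B = 2 * b + 2" "even a" "even b" "a \<ge> 0"
        proof -
          have "\<exists>a b. A = 2 * a \<and> B = 2 * b + 2 \<and> even a \<and> even b \<and> a \<ge> 0" using F3 F2 False eB A0 by presburger
          then show ?thesis using that by blast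
        qed
        show ?thesis by (rule caseB2_gen[OF V _ _ ab(3,5,4)]) (simp_all add: r y ab(1,2) field_simps)
      qed
    qed
  qed
qed


lemma mid_form: assumes "p \<in> Grid k" "q \<in> Grid k"
  obtains \<rho> s Y A B where "gmid k p q = ((\<rho>, s), Y)" "tvalid k (\<rho>, s)" "\<rho> = of_int A / 4"
    "Y = of_int B / 4" "even A = even B"
proof -
  obtain ap bp where P: "fst (fst p) = of_int ap / 2" "snd p = of_int bp / 2" "even ap = even bp"
    by (rule grid_D[OF assms(1)])
  obtain aq bq where Q: "fst (fst q) = of_int aq / 2" "snd q = of_int bq / 2" "even aq = even bq"
    by (rule grid_D[OF assms(2)])
  note Vp = Grid_valid[OF assms(1)] and Vq = Grid_valid[OF assms(2)]
  define xm where "xm = tmid k (fst p) (fst q)"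
  obtain \<rho> s where xm: "xm = (\<rho>, s)" by fastforce
  have tc: "tvalid k xm" "tdist (fst p) xm = tdist (fst p) (fst q) / 2"
    using tmid_char[OF Vp Vq] xm_def by simp_all
  obtain D where D: "2 * tdist (fst p) (fst q) = of_int D" "even D = even (ap + aq)"
  proof (cases "snd (fst p) = snd (fst q)")
    case True
    then have "2 * tdist (fst p) (fst q) = of_int \<bar>ap - aq\<bar>" unfolding tdist_def P(1) Q(1)
      using two_abs_half by simp
    moreover have "even \<bar>ap - aq\<bar> = even (ap + aq)" by (simp add: abs_if) presburger
    ultimately show ?thesis using that by blast
  next
    case False
    then have "2 * tdist (fst p) (fst q) = of_int (ap + aq)" unfolding tdist_def P(1) Q(1)
      by (simp add: field_simps)
    then show ?thesis using that by blast
  qed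
  obtain A where A: "\<rho> = of_int A / 4" "even A = even D"
  proof -
    have e: "tdist (fst p) (\<rho>, s) = of_int D / 4" using tc(2) D(1) xm by simp
    show ?thesis
    proof (cases "snd (fst p) = s")
      case True
      then have "\<bar>of_int ap / 2 - \<rho>\<bar> = of_int D / 4" using e P(1) by (simp add: tdist_def)
      then have "\<rho> = of_int (2 * ap - D) / 4 \<or> \<rho> = of_int (2 * ap + D) / 4"
        by (auto simp: abs_if field_simps split: if_splits)
      then show ?thesis
      proof (elim disjE)
        assume "\<rho> = of_int (2 * ap - D) / 4" then show ?thesis using that[of "2 * ap - D"] by simp
      next
        assume "\<rho> = of_int (2 * ap + D) / 4" then show ?thesis using that[of "2 * ap + D"] by simp
      qed
    next
      case False
      then have "of_int ap / 2 + \<rho> = of_int D / 4" using e P(1) by (simp add: tdist_def)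
      then have "\<rho> = of_int (D - 2 * ap) / 4" by (simp add: field_simps)
      then show ?thesis using that[of "D - 2 * ap"] by simp
    qed
  qed
  have "snd (gmid k p q) = of_int (bp + bq) / 4" using P(2) Q(2) by (simp add: gmid_def field_simps)
  moreover have "even A = even (bp + bq)" using A(2) D(2) P(3) Q(3) by simp
  moreover have "gmid k p q = ((\<rho>, s), snd (gmid k p q))" using xm xm_def by (simp add: gmid_def)
  ultimately show ?thesis using that tc(1) xm A(1) by metis
qed

lemma fc_props: assumes "p \<in> Grid k" "q \<in> Grid k"
  shows "g_floor k p q \<in> Grid k \<and> g_ceil k p q \<in> Grid k \<and> g_preceq k (g_floor k p q) (g_ceil k p q)
    \<and> gmid k (g_floor k p q) (g_ceil k p q) = gmid k p q"
proof -
  let ?P = "\<lambda>uv. fst uv \<in> Grid k \<and> snd uv \<in> Grid k \<and> g_preceq k (fst uv) (snd uv)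
      \<and> gmid k (fst uv) (snd uv) = gmid k p q"
  obtain \<rho> s Y A B where m: "gmid k p q = ((\<rho>, s), Y)" "tvalid k (\<rho>, s)" "\<rho> = of_int A / 4"
    "Y = of_int B / 4" "even A = even B" by (rule mid_form[OF assms])
  obtain u v where uv: "u \<in> Grid k" "v \<in> Grid k" "g_preceq k u v" "gmid k u v = ((\<rho>, s), Y)"
    using exist_pair[OF m(2-5)] by blast
  have ex: "?P (u, v)" using uv m(1) by simp
  have "\<exists>!uv. ?P uv"
  proof (rule ex1I[of _ "(u, v)"])
    show "?P (u, v)" by (rule ex)
    fix uv assume "?P uv"
    then have "fst uv = u \<and> snd uv = v" using pair_uniq[OF _ _ _ uv(1-3)] uv(4) m(1) by metis
    then show "uv = (u, v)" by (simp add: prod_eq_iff)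
  qed
  from theI'[OF this] show ?thesis unfolding g_floor_def g_ceil_def g_floorceil_def .
qed

lemma pair_gnorm: assumes "u \<in> Grid k" "v \<in> Grid k" "g_preceq k u v" shows "gnorm u v \<le> 1"
proof -
  from preceq_cases[OF assms(3)] show ?thesis
  proof (elim disjE exE conjE)
    assume "u = v" then show ?thesis by (simp add: gnorm_self)
  next
    assume "g_prec k u v" then show ?thesis using shapeA(1) by fastforce
  next
    fix c assume "g_prec k u c" "g_prec k c v" then show ?thesis using shapeB by fastforce
  qed
qed


lemma comp_bounds: assumes "p \<in> Grid k" "q \<in> Grid k"
  shows "gnorm p (g_floor k p q) \<le> gnorm p q / 2 + 1/2" "gnorm p (g_ceil k p q) \<le> gnorm p q / 2 + 1/2"
    "gnorm p q \<ge> 2 \<Longrightarrow> g_floor k p q \<noteq> p" "gnorm p q \<ge> 2 \<Longrightarrow> g_floor k p q \<noteq> q"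
    "gnorm p q \<ge> 2 \<Longrightarrow> g_ceil k p q \<noteq> p" "gnorm p q \<ge> 2 \<Longrightarrow> g_ceil k p q \<noteq> q"
proof -
  define u where "u = g_floor k p q"
  define v where "v = g_ceil k p q"
  define m where "m = gmid k p q"
  have F: "u \<in> Grid k" "v \<in> Grid k" "g_preceq k u v" "gmid k u v = m"
    using fc_props[OF assms] unfolding u_def v_def m_def by auto
  have n: "gnorm u v \<le> 1" by (rule pair_gnorm[OF F(1-3)])
  note Vp = Grid_valid[OF assms(1)] and Vq = Grid_valid[OF assms(2)]
  note Vu = Grid_valid[OF F(1)] and Vv = Grid_valid[OF F(2)]
  have c1: "gnorm p m = gnorm p q / 2" "gnorm m q = gnorm p q / 2" using gmid_char[OF Vp Vq] m_def by simp_all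
  have c2: "gnorm u m = gnorm u v / 2" "gnorm m v = gnorm u v / 2" using gmid_char[OF Vu Vv] F(4) by simp_all
  have Vm: "tvalid k (fst m)" using gmid_char[OF Vp Vq] m_def by simp
  have nn: "fst (fst p) \<ge> 0" "fst (fst q) \<ge> 0" "fst (fst m) \<ge> 0" "fst (fst u) \<ge> 0" "fst (fst v) \<ge> 0"
    using Vp Vq Vm Vu Vv tvalid_nonneg by blast+
  have "gnorm p u \<le> gnorm p m + gnorm m u" by (rule gnorm_tri) (use nn in auto)
  then show "gnorm p (g_floor k p q) \<le> gnorm p q / 2 + 1/2" using c1 c2 n gnorm_sym[of m u] u_def by simp
  have "gnorm p v \<le> gnorm p m + gnorm m v" by (rule gnorm_tri) (use nn in auto)
  then show "gnorm p (g_ceil k p q) \<le> gnorm p q / 2 + 1/2" using c1 c2 n v_def by simp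
  show "gnorm p q \<ge> 2 \<Longrightarrow> g_floor k p q \<noteq> p" using c1 c2 n u_def by auto
  show "gnorm p q \<ge> 2 \<Longrightarrow> g_floor k p q \<noteq> q" using c1 c2 n u_def gnorm_sym[of m q] by auto
  show "gnorm p q \<ge> 2 \<Longrightarrow> g_ceil k p q \<noteq> p" using c1 c2 n v_def gnorm_sym[of m p] by auto
  show "gnorm p q \<ge> 2 \<Longrightarrow> g_ceil k p q \<noteq> q" using c1 c2 n v_def by auto
qed

theorem lemma4p4:
  fixes k :: nat and p q :: "'n::finite \<Rightarrow> gpt"
  assumes "k \<ge> 1"
    and "\<forall>i. p i \<in> Grid k" and "\<forall>i. q i \<in> Grid k"
    and "vnorm p q \<ge> 2"
  shows "v_ceil k p q \<notin> {p, q} \<and> v_floor k p q \<notin> {p, q}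
    \<and> vnorm p (v_ceil k p q) < vnorm p q \<and> vnorm p (v_floor k p q) < vnorm p q"
proof -
  define D where "D = vnorm p q"
  have fin: "finite (range (\<lambda>i. gnorm (p i) (q i)))" by simp
  have ne: "range (\<lambda>i. gnorm (p i) (q i)) \<noteq> {}" by simp
  have le: "gnorm (p i) (q i) \<le> D" for i unfolding D_def vnorm_def by (rule Max_ge[OF fin]) simp
  obtain i0 where i0: "gnorm (p i0) (q i0) = D"
  proof -
    have "Max (range (\<lambda>i. gnorm (p i) (q i))) \<in> range (\<lambda>i. gnorm (p i) (q i))" by (rule Max_in[OF fin ne])
    then obtain j where "Max (range (\<lambda>i. gnorm (p i) (q i))) = gnorm (p j) (q j)" by blast
    then show ?thesis using that unfolding D_def vnorm_def by metis
  qed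
  have D2: "D \<ge> 2" using assms(4) D_def by simp
  note cb = comp_bounds[OF assms(2)[rule_format] assms(3)[rule_format]]
  have lt1: "vnorm p (v_ceil k p q) < D"
    unfolding vnorm_def v_ceil_def
  proof (subst Max_less_iff)
    show "finite (range (\<lambda>i. gnorm (p i) (g_ceil k (p i) (q i))))" by simp
    show "range (\<lambda>i. gnorm (p i) (g_ceil k (p i) (q i))) \<noteq> {}" by simp
    show "\<forall>a\<in>range (\<lambda>i. gnorm (p i) (g_ceil k (p i) (q i))). a < D"
    proof
      fix a assume "a \<in> range (\<lambda>i. gnorm (p i) (g_ceil k (p i) (q i)))"
      then obtain i where a: "a = gnorm (p i) (g_ceil k (p i) (q i))" by blast
      have "a \<le> gnorm (p i) (q i) / 2 + 1/2" using cb(2)[of i] a by simp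
      then show "a < D" using le[of i] D2 by linarith
    qed
  qed
  have lt2: "vnorm p (v_floor k p q) < D"
    unfolding vnorm_def v_floor_def
  proof (subst Max_less_iff)
    show "finite (range (\<lambda>i. gnorm (p i) (g_floor k (p i) (q i))))" by simp
    show "range (\<lambda>i. gnorm (p i) (g_floor k (p i) (q i))) \<noteq> {}" by simp
    show "\<forall>a\<in>range (\<lambda>i. gnorm (p i) (g_floor k (p i) (q i))). a < D"
    proof
      fix a assume "a \<in> range (\<lambda>i. gnorm (p i) (g_floor k (p i) (q i)))"
      then obtain i where a: "a = gnorm (p i) (g_floor k (p i) (q i))" by blast
      have "a \<le> gnorm (p i) (q i) / 2 + 1/2" using cb(1)[of i] a by simp
      then show "a < D" using le[of i] D2 by linarith
    qed
  qed
  have g: "gnorm (p i0) (q i0) \<ge> 2" using i0 D2 by simp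
  have "v_ceil k p q \<noteq> p" using cb(5)[OF g] unfolding v_ceil_def by metis
  moreover have "v_ceil k p q \<noteq> q" using cb(6)[OF g] unfolding v_ceil_def by metis
  moreover have "v_floor k p q \<noteq> p" using cb(3)[OF g] unfolding v_floor_def by metis
  moreover have "v_floor k p q \<noteq> q" using cb(4)[OF g] unfolding v_floor_def by metis
  ultimately show ?thesis using lt1 lt2 D_def by simp
qed

end
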